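(* Let $\mathcal{X}$ and $\mathcal{Y}$ be finite sets with $2 \le |\mathcal{X}|,|\mathcal{Y}| < \infty$, and let $X\in\mathcal{X}$, $Y\in\mathcal{Y}$ be random variables with joint pmf $P_{X,Y}$ whose marginals satisfy $P_X(x)>0$ for all $x\in\mathcal{X}$ and $P_Y(y)>0$ for all $y\in\mathcal{Y}$. Let $W$ be the $|\mathcal{Y}|\times|\mathcal{X}|$ column stochastic matrix of the channel $P_{Y|X}$ (its $x$th column is $P_{Y|X=x}$). Suppose $f:(0,\infty)\to\mathbb{R}$ is convex, strictly convex and twice differentiable at $1$, with $f(1)=0$ and $f''(1)>0$. Then $$\eta_{\chi^2}(P_X,P_{Y|X}) = \lim_{\delta\to 0^+}\ \sup_{R_X\in\mathcal{P}_{\mathcal{X}}:\ 0<D_f(R_X\|P_X)\le\delta} \frac{D_f(WR_X\|WP_X)}{D_f(R_X\|P_X)}.$$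
   Context: $\mathcal{P}_{\mathcal{X}}$ denotes the set of pmfs on $\mathcal{X}$, viewed as column vectors; a channel $W$ maps $R_X$ to $WR_X\in\mathcal{P}_{\mathcal{Y}}$. For convex $f:(0,\infty)\to\mathbb{R}$, strictly convex at $1$ (i.e. $\lambda f(x)+(1-\lambda)f(y)>f(1)$ whenever $\lambda\in(0,1)$, $x,y>0$, $\lambda x+(1-\lambda)y=1$) with $f(1)=0$, the $f$-divergence is $D_f(R_X\|P_X)=\sum_{x}P_X(x)f(R_X(x)/P_X(x))$, with conventions $f(0)=\lim_{t\to0^+}f(t)$, $0f(0/0)=0$, and $0f(r/0)=r\lim_{p\to0^+}pf(1/p)$ for $r>0$. The $\chi^2$-divergence is the case $f(t)=t^2-1$: $\chi^2(R_X\|P_X)=\sum_x (R_X(x)-P_X(x))^2/P_X(x)$. The contraction coefficient is $\eta_f(P_X,P_{Y|X})=\sup\{D_f(WR_X\|WP_X)/D_f(R_X\|P_X): R_X\in\mathcal{P}_{\mathcal{X}},\ 0<D_f(R_X\|P_X)<\infty\}$ (defined to be $0$ if $X$ or $Y$ is almost surely constant), and $\eta_{\chi^2}$ denotes this coefficient for the $\chi^2$-divergence. *)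

theory Defs
  imports "HOL-Analysis.Analysis"
begin

definition pmf_vec :: "real^'n \<Rightarrow> bool" where
  "pmf_vec R \<longleftrightarrow> (\<forall>i. R$i \<ge> 0) \<and> (\<Sum>i\<in>UNIV. R$i) = 1"

definition f_zero :: "(real \<Rightarrow> real) \<Rightarrow> ereal" where
  "f_zero f = Lim (at_right 0) (\<lambda>t. ereal (f t))"

text \<open>Convention 0 f(r/0) = r lim_{p->0+} p f(1/p).\<close>
definition f_star :: "(real \<Rightarrow> real) \<Rightarrow> ereal" where
  "f_star f = Lim (at_right 0) (\<lambda>p. ereal (p * f (1 / p)))"

definition fdiv :: "(real \<Rightarrow> real) \<Rightarrow> real^'n \<Rightarrow> real^'n \<Rightarrow> ereal" where
  "fdiv f R P = (\<Sum>i\<in>UNIV.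
      if P$i = 0 then (if R$i = 0 then 0 else ereal (R$i) * f_star f)
      else if R$i = 0 then ereal (P$i) * f_zero f
      else ereal (P$i * f (R$i / P$i)))"

definition chi2 :: "real \<Rightarrow> real" where
  "chi2 t = t\<^sup>2 - 1"

text \<open>Contraction coefficient; 0 if X or Y is almost surely constant.\<close>
definition eta :: "(real \<Rightarrow> real) \<Rightarrow> real^'x \<Rightarrow> real^'x^'y \<Rightarrow> ereal" where
  "eta f P W = (if (\<exists>x. P$x = 1) \<or> (\<exists>y. (W *v P)$y = 1) then 0
     else Sup {fdiv f (W *v R) (W *v P) / fdiv f R P | R.
                 pmf_vec R \<and> 0 < fdiv f R P \<and> fdiv f R P < \<infinity>})"

definition strictly_convex_at_1 :: "(real \<Rightarrow> real) \<Rightarrow> bool" where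
  "strictly_convex_at_1 f \<longleftrightarrow>
     (\<forall>l x y. 0 < l \<and> l < 1 \<and> 0 < x \<and> 0 < y \<and> x \<noteq> y \<and> l * x + (1 - l) * y = 1
        \<longrightarrow> l * f x + (1 - l) * f y > f 1)"

end

theory Submission
  imports Defs "HOL-Analysis.Analysis"
begin


lemma taylor1:
  fixes f :: "real \<Rightarrow> real"
  assumes diff: "\<exists>e>0. \<forall>t. \<bar>t - 1\<bar> < e \<longrightarrow> f differentiable (at t)"
    and d2: "deriv f differentiable (at 1)"
    and eps: "\<epsilon> > 0"
  shows "\<exists>\<rho>>0. \<forall>u. \<bar>u\<bar> < \<rho> \<longrightarrow>
     \<bar>f (1+u) - f 1 - deriv f 1 * u - deriv (deriv f) 1 / 2 * u\<^sup>2\<bar> \<le> \<epsilon> * u\<^sup>2"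
proof -
  obtain e where e: "e > 0" "\<And>t. \<bar>t - 1\<bar> < e \<Longrightarrow> f differentiable (at t)" using diff by blast
  define D where "D = deriv (deriv f) 1"
  have "(deriv f has_real_derivative D) (at 1)"
    using d2 unfolding D_def by (simp add: DERIV_deriv_iff_real_differentiable)
  then have lim: "((\<lambda>h. (deriv f (1 + h) - deriv f 1) / h) \<longlongrightarrow> D) (at 0)"
    by (simp add: DERIV_def)
  then obtain d where d: "d > 0" "\<And>h. h \<noteq> 0 \<Longrightarrow> \<bar>h\<bar> < d \<Longrightarrow>
      \<bar>(deriv f (1 + h) - deriv f 1) / h - D\<bar> < \<epsilon>"
    using LIM_D[OF lim eps] by (auto simp: dist_real_def)
  have d': "\<bar>deriv f (1 + h) - deriv f 1 - D * h\<bar> \<le> \<epsilon> * \<bar>h\<bar>" if "\<bar>h\<bar> < d" for h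
  proof (cases "h = 0")
    case True then show ?thesis by simp
  next
    case False
    have "\<bar>(deriv f (1 + h) - deriv f 1) / h - D\<bar> < \<epsilon>" using d False that by auto
    moreover have "(deriv f (1 + h) - deriv f 1) / h - D = (deriv f (1 + h) - deriv f 1 - D * h) / h"
      using False by (simp add: field_simps)
    ultimately have "\<bar>deriv f (1 + h) - deriv f 1 - D * h\<bar> / \<bar>h\<bar> < \<epsilon>" by (simp add: abs_divide)
    then show ?thesis using False by (simp add: divide_less_eq less_imp_le)
  qed
  define \<rho> where "\<rho> = min d e"
  have "\<rho> > 0" using d e by (simp add: \<rho>_def)
  moreover have "\<bar>f (1+u) - f 1 - deriv f 1 * u - D / 2 * u\<^sup>2\<bar> \<le> \<epsilon> * u\<^sup>2" if u: "\<bar>u\<bar> < \<rho>" for u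
  proof -
    define h where "h = (\<lambda>s. f (1+s) - f 1 - deriv f 1 * s - D / 2 * s\<^sup>2)"
    define h' where "h' = (\<lambda>s. deriv f (1+s) - deriv f 1 - D * s)"
    have hd: "(h has_real_derivative h' s) (at s)" if "\<bar>s\<bar> < \<rho>" for s
    proof -
      have "f differentiable (at (1+s))" using e that by (auto simp: \<rho>_def)
      then have "(f has_real_derivative deriv f (1+s)) (at (1+s))"
        by (simp add: DERIV_deriv_iff_real_differentiable)
      then have "((\<lambda>s. f (1+s)) has_real_derivative deriv f (1+s)) (at s)"
        using DERIV_shift[of f "deriv f (1+s)" s 1] by (simp add: add.commute)
      then show ?thesis unfolding h_def h'_def
        by (auto intro!: derivative_eq_intros simp: power2_eq_square)
    qed
    have h0: "h 0 = 0" by (simp add: h_def)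
    show ?thesis
    proof (cases "u = 0")
      case True then show ?thesis by (simp)
    next
      case False
      have "\<exists>z. min 0 u < z \<and> z < max 0 u \<and> h (max 0 u) - h (min 0 u) = (max 0 u - min 0 u) * h' z"
        apply (rule MVT2) using False apply simp
        using hd u by auto
      then obtain z where z: "min 0 u < z" "z < max 0 u" "h (max 0 u) - h (min 0 u) = (max 0 u - min 0 u) * h' z" by blast
      have zu: "\<bar>z\<bar> \<le> \<bar>u\<bar>" using z by auto
      have "\<bar>h u\<bar> = \<bar>u\<bar> * \<bar>h' z\<bar>"
        using z h0 False by (cases "u > 0") (auto simp: abs_mult)
      also have "\<dots> \<le> \<bar>u\<bar> * (\<epsilon> * \<bar>z\<bar>)"
        using d'[of z] zu u unfolding h'_def \<rho>_def by (auto intro!: mult_left_mono)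
      also have "\<dots> \<le> \<bar>u\<bar> * (\<epsilon> * \<bar>u\<bar>)"
        using zu eps by (auto intro!: mult_left_mono)
      also have "\<dots> = \<epsilon> * u\<^sup>2" by (simp add: power2_eq_square abs_mult_self_eq)
      finally show ?thesis unfolding h_def .
    qed
  qed
  ultimately show ?thesis unfolding D_def by blast
qed



lemma convex_step:
  fixes f :: "real \<Rightarrow> real"
  assumes conv: "convex_on {0<..} f" and f1: "f 1 = 0"
    and l: "0 \<le> l" "l \<le> 1" and x: "x > 0"
  shows "f ((1 - l) + l * x) - deriv f 1 * ((1 - l) + l * x - 1) \<le> l * (f x - deriv f 1 * (x - 1))"
proof -
  have "f ((1 - l) *\<^sub>R 1 + l *\<^sub>R x) \<le> (1 - l) * f 1 + l * f x"
    by (rule convex_onD[OF conv]) (use l x in auto)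
  then have "f ((1 - l) + l * x) \<le> l * f x" using f1 by simp
  moreover have "deriv f 1 * ((1 - l) + l * x - 1) = l * (deriv f 1 * (x - 1))" by (simp add: algebra_simps)
  ultimately show ?thesis by (simp add: algebra_simps)
qed

lemma lowbnd:
  fixes f :: "real \<Rightarrow> real"
  assumes conv: "convex_on {0<..} f" and f1: "f 1 = 0"
    and diff: "\<exists>e>0. \<forall>t. \<bar>t - 1\<bar> < e \<longrightarrow> f differentiable (at t)"
    and d2: "deriv f differentiable (at 1)" and D: "deriv (deriv f) 1 > 0"
  shows "\<exists>\<rho>0>0. (\<forall>t>0. f t - deriv f 1 * (t-1) \<ge> 0) \<and>
     (\<forall>\<rho>. 0 < \<rho> \<and> \<rho> < \<rho>0 \<longrightarrow> (\<forall>t>0. \<bar>t-1\<bar> \<ge> \<rho> \<longrightarrow>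
        f t - deriv f 1 * (t-1) \<ge> deriv (deriv f) 1 / 4 * \<rho>\<^sup>2))"
proof -
  define D where "D = deriv (deriv f) 1"
  define g where "g = (\<lambda>t. f t - deriv f 1 * (t-1))"
  have "D/4 > 0" using D by (simp add: D_def)
  from taylor1[OF diff d2 this] obtain \<rho>0 where r0: "\<rho>0 > 0"
    "\<And>u. \<bar>u\<bar> < \<rho>0 \<Longrightarrow> \<bar>f (1+u) - f 1 - deriv f 1 * u - D / 2 * u\<^sup>2\<bar> \<le> D/4 * u\<^sup>2"
    unfolding D_def by blast
  have near: "g (1+u) \<ge> D/4 * u\<^sup>2" if "\<bar>u\<bar> < \<rho>0" for u
  proof -
    have "\<bar>f (1+u) - f 1 - deriv f 1 * u - D / 2 * u\<^sup>2\<bar> \<le> D/4 * u\<^sup>2" using r0(2)[OF that] .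
    then have "f (1+u) - deriv f 1 * u - D / 2 * u\<^sup>2 \<ge> - (D/4 * u\<^sup>2)" using f1 by linarith
    then show ?thesis unfolding g_def by simp
  qed
  have far: "g t \<ge> D/4 * \<rho>\<^sup>2" if r: "0 < \<rho>" "\<rho> < \<rho>0" and t: "t > 0" "\<bar>t-1\<bar> \<ge> \<rho>" for \<rho> t
  proof -
    define l where "l = \<rho> / \<bar>t - 1\<bar>"
    have tne: "\<bar>t - 1\<bar> > 0" using r t by auto
    have l: "0 < l" "l \<le> 1" using r t tne by (auto simp: l_def field_simps)
    have st: "g ((1 - l) + l * t) \<le> l * g t" unfolding g_def by (rule convex_step[OF conv f1]) (use l t in auto)
    have "(1 - l) + l * t = 1 + l * (t - 1)" by (simp add: algebra_simps)
    moreover have "l * (t - 1) = \<rho> \<or> l * (t - 1) = - \<rho>"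
      using tne by (cases "t \<ge> 1") (auto simp: l_def field_simps)
    ultimately have "\<exists>u. \<bar>u\<bar> = \<rho> \<and> (1 - l) + l * t = 1 + u" using r by auto
    then obtain u where u: "\<bar>u\<bar> = \<rho>" "(1 - l) + l * t = 1 + u" by blast
    have "D/4 * \<rho>\<^sup>2 \<le> g (1 + u)" proof -
      have "u\<^sup>2 = \<rho>\<^sup>2" using u(1) by (metis power2_abs)
      then show ?thesis using near[of u] u r by simp
    qed
    also have "\<dots> \<le> l * g t" using st u by simp
    finally have 1: "D/4 * \<rho>\<^sup>2 \<le> l * g t" .
    have "D/4 * \<rho>\<^sup>2 > 0" using \<open>D/4>0\<close> r by simp
    then have "g t > 0" using 1 l by (metis mult_nonneg_nonpos not_le order.strict_trans2 less_imp_le)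
    then have "l * g t \<le> g t" using l by (simp add: mult_le_cancel_right1)
    then show ?thesis using 1 by simp
  qed
  have nonneg: "g t \<ge> 0" if "t > 0" for t
  proof (cases "\<bar>t - 1\<bar> < \<rho>0")
    case True
    then have "g (1 + (t-1)) \<ge> D/4 * (t-1)\<^sup>2" using near by blast
    moreover have "D/4 * (t-1)\<^sup>2 \<ge> 0" using \<open>D/4>0\<close> by simp
    ultimately show ?thesis by simp
  next
    case False
    then have "g t \<ge> D/4 * (\<rho>0/2)\<^sup>2" using far[of "\<rho>0/2" t] r0 that by auto
    moreover have "D/4 * (\<rho>0/2)\<^sup>2 \<ge> 0" using \<open>D/4>0\<close> by simp
    ultimately show ?thesis by simp
  qed
  show ?thesis using r0(1) nonneg far unfolding g_def D_def by blast
qed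



lemma fzero_bound:
  fixes f :: "real \<Rightarrow> real"
  assumes conv: "convex_on {0<..} f" and f1: "f 1 = 0"
    and nonneg: "\<forall>t>0. f t - deriv f 1 * (t-1) \<ge> 0"
    and far: "\<forall>t>0. \<bar>t-1\<bar> \<ge> \<rho> \<longrightarrow> f t - deriv f 1 * (t-1) \<ge> m"
    and r: "0 < \<rho>" "\<rho> < 1"
  shows "f_zero f \<ge> ereal (m - deriv f 1)"
proof -
  define g where "g = (\<lambda>t. f t - deriv f 1 * (t-1))"
  have g0: "g t \<ge> 0" if "t > 0" for t using nonneg that unfolding g_def by auto
  have dec: "g t \<le> g s" if st: "0 < s" "s \<le> t" "t < 1" for s t
  proof (cases "s = t")
    case True then show ?thesis by simp
  next
    case False
    define l where "l = (1 - t) / (1 - s)"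
    have l: "0 \<le> l" "l \<le> 1" using st by (auto simp: l_def field_simps)
    have "g ((1 - l) + l * s) \<le> l * g s" unfolding g_def by (rule convex_step[OF conv f1]) (use l st in auto)
    moreover have "(1 - l) + l * s = t" proof -
      have ne: "1 - s \<noteq> 0" using st by simp
      have "l * (1 - s) = 1 - t" using ne by (simp add: l_def)
      moreover have "(1 - l) + l * s = 1 - l * (1 - s)" by (simp add: algebra_simps)
      ultimately show ?thesis by simp
    qed
    ultimately have "g t \<le> l * g s" by simp
    also have "\<dots> \<le> g s" using l g0[of s] st by (simp add: mult_left_le_one_le)
    finally show ?thesis .
  qed
  define k where "k = (\<lambda>t. ereal (- g (min t (1/2))))"
  have "(k \<longlongrightarrow> Inf (k ` ({0<..} \<inter> UNIV))) (at 0 within ({0<..} \<inter> UNIV))"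
  proof (rule Lim_right_bound[where K="-\<infinity>"])
    fix a b :: real assume "0 < a" "a \<le> b"
    then have "g (min b (1/2)) \<le> g (min a (1/2))" by (intro dec) auto
    then show "k a \<le> k b" by (simp add: k_def)
  qed simp
  then obtain L where L: "(k \<longlongrightarrow> L) (at_right 0)" by auto
  have "\<forall>\<^sub>F t in at_right 0. k t = ereal (- g t)"
    unfolding k_def eventually_at_right_field
    by (rule exI[of _ "1/2"]) auto
  then have "((\<lambda>t. ereal (- g t)) \<longlongrightarrow> L) (at_right 0)" using L tendsto_cong by force
  then have Lg: "((\<lambda>t. ereal (g t)) \<longlongrightarrow> - L) (at_right 0)"
    using tendsto_uminus_ereal by fastforce
  have "\<forall>\<^sub>F t in at_right 0. ereal 0 \<le> ereal (g t)"
    unfolding eventually_at_right_field by (rule exI[of _ 1]) (auto intro: g0)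
  then have "ereal 0 \<le> - L" using tendsto_le[OF _ Lg tendsto_const] by auto
  then have "- L \<noteq> - \<infinity>" by auto
  have lin: "((\<lambda>t. ereal (deriv f 1 * (t - 1))) \<longlongrightarrow> ereal (deriv f 1 * (0 - 1))) (at_right 0)"
    by (intro tendsto_intros)
  have "((\<lambda>t. ereal (g t) + ereal (deriv f 1 * (t - 1))) \<longlongrightarrow> - L + ereal (deriv f 1 * (0 - 1))) (at_right 0)"
    by (rule tendsto_add_ereal_nonneg[OF \<open>- L \<noteq> - \<infinity>\<close> _ Lg lin]) simp
  then have fl: "((\<lambda>t. ereal (f t)) \<longlongrightarrow> - L + ereal (deriv f 1 * (0 - 1))) (at_right 0)"
    by (simp add: g_def)
  then have fz: "f_zero f = - L + ereal (deriv f 1 * (0 - 1))"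
    unfolding f_zero_def by (intro tendsto_Lim) auto
  have lin2: "((\<lambda>t. ereal (m + deriv f 1 * (t - 1))) \<longlongrightarrow> ereal (m + deriv f 1 * (0 - 1))) (at_right 0)"
    by (intro tendsto_intros)
  have "\<forall>\<^sub>F t in at_right 0. ereal (m + deriv f 1 * (t - 1)) \<le> ereal (f t)"
    unfolding eventually_at_right_field
  proof (rule exI[of _ "1 - \<rho>"], intro conjI allI impI)
    show "(0::real) < 1 - \<rho>" using r by simp
    fix t :: real assume "0 < t" "t < 1 - \<rho>"
    then have "f t - deriv f 1 * (t-1) \<ge> m" using far by auto
    then show "ereal (m + deriv f 1 * (t - 1)) \<le> ereal (f t)" by simp
  qed
  then have "ereal (m + deriv f 1 * (0 - 1)) \<le> - L + ereal (deriv f 1 * (0 - 1))"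
    using tendsto_le[OF _ fl lin2] by auto
  then show ?thesis using fz by simp
qed



lemma fdiv_pos:
  fixes R P :: "real^'n"
  assumes "\<forall>i. P$i > 0" "\<forall>i. R$i > 0"
  shows "fdiv f R P = ereal (\<Sum>i\<in>UNIV. P$i * f (R$i / P$i))"
  unfolding fdiv_def using assms by (simp add: less_imp_neq[symmetric])

lemma f_zero_chi2: "f_zero chi2 = ereal (-1)"
proof -
  have "((\<lambda>t. ereal (chi2 t)) \<longlongrightarrow> ereal (chi2 0)) (at_right 0)"
    unfolding chi2_def by (intro tendsto_intros)
  then show ?thesis unfolding f_zero_def by (intro tendsto_Lim) (auto simp: chi2_def)
qed

lemma fdiv_chi2:
  fixes R P :: "real^'n"
  assumes P: "\<forall>i. P$i > 0" and R: "\<forall>i. R$i \<ge> 0" and s: "(\<Sum>i\<in>UNIV. R$i) = (\<Sum>i\<in>UNIV. P$i)"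
  shows "fdiv chi2 R P = ereal (\<Sum>i\<in>UNIV. P$i * (R$i / P$i - 1)\<^sup>2)"
proof -
  have t: "(if P$i = 0 then (if R$i = 0 then 0 else ereal (R$i) * f_star chi2)
      else if R$i = 0 then ereal (P$i) * f_zero chi2
      else ereal (P$i * chi2 (R$i / P$i))) = ereal (P$i * (R$i / P$i - 1)\<^sup>2 + 2 * (R$i - P$i))" for i
  proof -
    have p: "P$i \<noteq> 0" using P by (metis less_irrefl)
    show ?thesis
    proof (cases "R$i = 0")
      case True then show ?thesis using p by (simp add: f_zero_chi2 power2_eq_square)
    next
      case False
      have "P$i * chi2 (R$i / P$i) = P$i * (R$i / P$i - 1)\<^sup>2 + 2 * (R$i - P$i)"
        using p by (simp add: chi2_def power2_eq_square field_simps)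
      then show ?thesis using p False by simp
    qed
  qed
  have "fdiv chi2 R P = ereal (\<Sum>i\<in>UNIV. P$i * (R$i / P$i - 1)\<^sup>2 + 2 * (R$i - P$i))"
    unfolding fdiv_def t by simp
  also have "(\<Sum>i\<in>UNIV. P$i * (R$i / P$i - 1)\<^sup>2 + 2 * (R$i - P$i)) = (\<Sum>i\<in>UNIV. P$i * (R$i / P$i - 1)\<^sup>2)"
    using s by (simp add: sum.distrib sum_subtractf sum_distrib_left[symmetric])
  finally show ?thesis .
qed

lemma fdiv_lower:
  fixes R P :: "real^'n" and f :: "real \<Rightarrow> real"
  assumes P: "\<forall>i. P$i > 0" and R: "\<forall>i. R$i \<ge> 0" and s: "(\<Sum>i\<in>UNIV. R$i) = (\<Sum>i\<in>UNIV. P$i)"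
    and nonneg: "\<forall>t>0. f t - deriv f 1 * (t-1) \<ge> 0"
    and far: "\<forall>t>0. \<bar>t-1\<bar> \<ge> \<rho> \<longrightarrow> f t - deriv f 1 * (t-1) \<ge> m"
    and fz: "f_zero f \<ge> ereal (m - deriv f 1)" and r: "\<rho> \<le> 1"
  shows "fdiv f R P \<ge> ereal (\<Sum>i\<in>UNIV. P$i * (if \<bar>R$i / P$i - 1\<bar> \<ge> \<rho> then m else 0))"
proof -
  define q where "q = (\<lambda>i. (if \<bar>R$i / P$i - 1\<bar> \<ge> \<rho> then m else 0))"
  have t: "ereal (P$i * q i + deriv f 1 * (R$i - P$i)) \<le> (if P$i = 0 then (if R$i = 0 then 0 else ereal (R$i) * f_star f)
      else if R$i = 0 then ereal (P$i) * f_zero f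
      else ereal (P$i * f (R$i / P$i)))" for i
  proof -
    have p: "P$i \<noteq> 0" "P$i > 0" using P by (metis less_irrefl, auto)
    show ?thesis
    proof (cases "R$i = 0")
      case True
      then have "q i = m" using r p by (simp add: q_def)
      then have "ereal (P$i * q i + deriv f 1 * (R$i - P$i)) = ereal (P$i) * ereal (m - deriv f 1)"
        using True by (simp add: algebra_simps)
      also have "\<dots> \<le> ereal (P$i) * f_zero f" using fz p by (intro ereal_mult_left_mono) auto
      finally show ?thesis using p True by simp
    next
      case False
      then have Rp: "R$i / P$i > 0" using R p by (metis divide_pos_pos less_eq_real_def)
      have 1: "f (R$i/P$i) - deriv f 1 * (R$i/P$i - 1) \<ge> q i"
        using nonneg far Rp unfolding q_def by auto
      have "P$i * q i + deriv f 1 * (R$i - P$i) = P$i * (q i + deriv f 1 * (R$i/P$i - 1))"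
        using p by (simp add: field_simps)
      also have "\<dots> \<le> P$i * f (R$i / P$i)" using 1 p by (intro mult_left_mono) auto
      finally show ?thesis using p False by simp
    qed
  qed
  have "ereal (\<Sum>i\<in>UNIV. P$i * q i + deriv f 1 * (R$i - P$i)) \<le> fdiv f R P"
    unfolding fdiv_def sum_ereal[symmetric] by (rule sum_mono) (rule t)
  moreover have "(\<Sum>i\<in>UNIV. P$i * q i + deriv f 1 * (R$i - P$i)) = (\<Sum>i\<in>UNIV. P$i * q i)"
    using s by (simp add: sum.distrib sum_subtractf sum_distrib_left[symmetric])
  ultimately show ?thesis unfolding q_def by simp
qed

lemma jensen_sq:
  fixes w u :: "'a \<Rightarrow> real"
  assumes "finite A" "\<forall>i\<in>A. w i \<ge> 0" "(\<Sum>i\<in>A. w i) = 1"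
  shows "(\<Sum>i\<in>A. w i * u i)\<^sup>2 \<le> (\<Sum>i\<in>A. w i * (u i)\<^sup>2)"
proof -
  define M where "M = (\<Sum>i\<in>A. w i * u i)"
  have "0 \<le> (\<Sum>i\<in>A. w i * (u i - M)\<^sup>2)" using assms by (intro sum_nonneg) auto
  also have "(\<Sum>i\<in>A. w i * (u i - M)\<^sup>2) = (\<Sum>i\<in>A. w i * (u i)\<^sup>2 - 2 * M * (w i * u i) + M\<^sup>2 * w i)"
    by (rule sum.cong) (auto simp: power2_eq_square algebra_simps)
  also have "\<dots> = (\<Sum>i\<in>A. w i * (u i)\<^sup>2) - 2 * M * M + M\<^sup>2 * 1"
    unfolding sum.distrib sum_subtractf sum_distrib_left[symmetric] M_def[symmetric] assms(3) by simp
  finally show ?thesis unfolding M_def[symmetric] by (simp add: power2_eq_square)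
qed

lemma avg_bound:
  fixes w u :: "'a \<Rightarrow> real"
  assumes "finite A" "\<forall>i\<in>A. w i \<ge> 0" "(\<Sum>i\<in>A. w i) = 1" "\<forall>i\<in>A. \<bar>u i\<bar> \<le> B"
  shows "\<bar>\<Sum>i\<in>A. w i * u i\<bar> \<le> B"
proof -
  have "\<bar>\<Sum>i\<in>A. w i * u i\<bar> \<le> (\<Sum>i\<in>A. \<bar>w i * u i\<bar>)" by (rule sum_abs)
  also have "\<dots> \<le> (\<Sum>i\<in>A. w i * B)" using assms by (intro sum_mono) (auto simp: abs_mult intro: mult_left_mono)
  also have "\<dots> = B" using assms(3) by (simp add: sum_distrib_right[symmetric])
  finally show ?thesis .
qed

lemma taylor_sum:
  fixes Q u :: "'a \<Rightarrow> real" and f :: "real \<Rightarrow> real"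
  assumes "finite A" "\<forall>i\<in>A. Q i \<ge> 0" "(\<Sum>i\<in>A. Q i * u i) = 0" and f1: "f 1 = 0"
    and tay: "\<forall>i\<in>A. \<bar>f (1 + u i) - f 1 - deriv f 1 * u i - a * (u i)\<^sup>2\<bar> \<le> e * (u i)\<^sup>2"
  shows "\<bar>(\<Sum>i\<in>A. Q i * f (1 + u i)) - a * (\<Sum>i\<in>A. Q i * (u i)\<^sup>2)\<bar> \<le> e * (\<Sum>i\<in>A. Q i * (u i)\<^sup>2)"
proof -
  have "(\<Sum>i\<in>A. Q i * f (1 + u i)) - a * (\<Sum>i\<in>A. Q i * (u i)\<^sup>2)
      = (\<Sum>i\<in>A. Q i * (f (1 + u i) - f 1 - deriv f 1 * u i - a * (u i)\<^sup>2)) + deriv f 1 * (\<Sum>i\<in>A. Q i * u i)"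
    using f1 by (simp add: sum.distrib sum_subtractf sum_distrib_left algebra_simps)
  also have "\<dots> = (\<Sum>i\<in>A. Q i * (f (1 + u i) - f 1 - deriv f 1 * u i - a * (u i)\<^sup>2))" using assms(3) by simp
  finally have eq: "(\<Sum>i\<in>A. Q i * f (1 + u i)) - a * (\<Sum>i\<in>A. Q i * (u i)\<^sup>2) = \<dots>" .
  have "\<bar>\<Sum>i\<in>A. Q i * (f (1 + u i) - f 1 - deriv f 1 * u i - a * (u i)\<^sup>2)\<bar>
     \<le> (\<Sum>i\<in>A. \<bar>Q i * (f (1 + u i) - f 1 - deriv f 1 * u i - a * (u i)\<^sup>2)\<bar>)" by (rule sum_abs)
  also have "\<dots> \<le> (\<Sum>i\<in>A. Q i * (e * (u i)\<^sup>2))"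
    using assms(2) tay by (intro sum_mono) (auto simp: abs_mult intro: mult_left_mono)
  also have "\<dots> = e * (\<Sum>i\<in>A. Q i * (u i)\<^sup>2)" by (simp add: sum_distrib_left algebra_simps)
  finally show ?thesis using eq by simp
qed



lemma lt1:
  fixes V :: "real^'n"
  assumes "CARD('n) \<ge> 2" "\<forall>i. V$i > 0" "(\<Sum>i\<in>UNIV. V$i) = 1"
  shows "V$i < 1"
proof -
  obtain j where j: "j \<noteq> i"
  proof -
    have "UNIV - {i} \<noteq> {}"
    proof
      assume "UNIV - {i} = {}"
      then have "(UNIV::'n set) = {i}" by auto
      then have "CARD('n) = card {i}" by (metis)
      then show False using assms(1) by simp
    qed
    then show ?thesis using that by blast
  qed
  have "(\<Sum>k\<in>UNIV. V$k) = V$i + (\<Sum>k\<in>UNIV - {i}. V$k)"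
    by (simp add: sum.remove)
  moreover have "V$j \<le> (\<Sum>k\<in>UNIV - {i}. V$k)"
    using j assms(2) by (intro member_le_sum) (auto intro: less_imp_le)
  ultimately show ?thesis using assms(2,3)[rule_format] by (smt (verit) assms(2))
qed

lemma ratio_bounds:
  fixes e a cX cY DX DY :: real
  assumes e: "0 < e" "e \<le> 1/2" and a: "a > 0" and cX: "cX > 0" and cY: "cY \<ge> 0"
    and hX: "\<bar>DX - a * cX\<bar> \<le> e * (a * cX)" and hY: "\<bar>DY - a * cY\<bar> \<le> e * (a * cY)"
  shows "DY / DX \<le> (1 + 4*e) * (cY / cX)" "DY / DX \<ge> (1 - 2*e) * (cY / cX)" "DX > 0"
proof -
  have ac: "a * cX > 0" using a cX by simp
  have acy: "a * cY \<ge> 0" using a cY by simp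
  have DXl: "DX \<ge> (1 - e) * (a * cX)" using hX by (simp add: abs_le_iff algebra_simps)
  have DXu: "DX \<le> (1 + e) * (a * cX)" using hX by (simp add: abs_le_iff algebra_simps)
  have DYl: "DY \<ge> (1 - e) * (a * cY)" using hY by (simp add: abs_le_iff algebra_simps)
  have DYu: "DY \<le> (1 + e) * (a * cY)" using hY by (simp add: abs_le_iff algebra_simps)
  have lpos: "(1 - e) * (a * cX) > 0" using e ac by simp
  then show DXp: "DX > 0" using DXl by linarith
  have "DY / DX \<le> (1 + e) * (a * cY) / DX" using DYu DXp by (simp add: divide_right_mono)
  also have "\<dots> \<le> (1 + e) * (a * cY) / ((1 - e) * (a * cX))"
    using lpos DXl e acy by (intro divide_left_mono) auto
  also have "\<dots> = ((1 + e) / (1 - e)) * (cY / cX)" using a cX e by (simp add: field_simps)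
  also have "\<dots> \<le> (1 + 4*e) * (cY / cX)"
  proof (rule mult_right_mono)
    have "1 + e \<le> (1 + 4*e) * (1 - e)" proof -
      have "e * e \<le> e * (1/2)" using e by (intro mult_left_mono) auto
      then show ?thesis by (simp add: algebra_simps)
    qed
    then show "(1 + e) / (1 - e) \<le> 1 + 4 * e" using e by (simp add: divide_le_eq)
  qed (use cX cY in simp)
  finally show "DY / DX \<le> (1 + 4*e) * (cY / cX)" .
  have upos: "(1 + e) * (a * cX) > 0" using e ac by simp
  have "(1 - 2*e) * (cY / cX) \<le> ((1 - e) / (1 + e)) * (cY / cX)"
  proof (rule mult_right_mono)
    have "(1 - 2*e) * (1 + e) \<le> 1 - e" using e by (simp add: algebra_simps)
    then show "1 - 2*e \<le> (1 - e) / (1 + e)" using e by (simp add: le_divide_eq)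
  qed (use cX cY in simp)
  also have "\<dots> = ((1 - e) * cY) / ((1 + e) * cX)" by simp
  also have "\<dots> = (a * ((1 - e) * cY)) / (a * ((1 + e) * cX))" using a by simp
  also have "\<dots> = (1 - e) * (a * cY) / ((1 + e) * (a * cX))" by (simp add: ac_simps)
  also have "\<dots> \<le> (1 - e) * (a * cY) / DX"
    using DXp DXu e acy by (intro divide_left_mono) auto
  also have "\<dots> \<le> DY / DX" using DYl DXp by (simp add: divide_right_mono)
  finally show "DY / DX \<ge> (1 - 2*e) * (cY / cX)" .
qed



theorem theorem1:
  fixes P :: "real^'x" and W :: "real^'x^'y" and f :: "real \<Rightarrow> real"
  assumes "CARD('x) \<ge> 2" and "CARD('y) \<ge> 2"
    and "pmf_vec P" and "\<forall>x. P$x > 0"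
    and "\<forall>x y. W$y$x \<ge> 0" and "\<forall>x. (\<Sum>y\<in>UNIV. W$y$x) = 1"
    and "\<forall>y. (W *v P)$y > 0"
    and "convex_on {0<..} f" and "strictly_convex_at_1 f"
    and "\<exists>e>0. \<forall>t. \<bar>t - 1\<bar> < e \<longrightarrow> f differentiable (at t)"
    and "deriv f differentiable (at 1)"
    and "f 1 = 0" and "deriv (deriv f) 1 > 0"
  shows "((\<lambda>\<delta>. Sup {fdiv f (W *v R) (W *v P) / fdiv f R P | R.
                    pmf_vec R \<and> 0 < fdiv f R P \<and> fdiv f R P \<le> ereal \<delta>})
          \<longlongrightarrow> eta chi2 P W) (at_right 0)"
proof -
  note A = assms
  define Q where "Q = W *v P"
  have Ppos: "\<And>x. P$x > 0" using A(4) by auto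
  have Pne: "\<And>x. P$x \<noteq> 0" using Ppos by (metis less_irrefl)
  have Qpos: "\<And>y. Q$y > 0" using A(7) by (auto simp: Q_def)
  have Qne: "\<And>y. Q$y \<noteq> 0" using Qpos by (metis less_irrefl)
  have sumP: "(\<Sum>x\<in>UNIV. P$x) = 1" using A(3) by (simp add: pmf_vec_def)
  have Wc: "\<And>R y. (W *v R)$y = (\<Sum>x\<in>UNIV. W$y$x * R$x)" by (simp add: matrix_vector_mult_def)
  have sumW: "(\<Sum>y\<in>UNIV. (W *v R)$y) = (\<Sum>x\<in>UNIV. R$x)" for R
  proof -
    have "(\<Sum>y\<in>UNIV. (W *v R)$y) = (\<Sum>y\<in>UNIV. \<Sum>x\<in>UNIV. W$y$x * R$x)" by (simp add: Wc)
    also have "\<dots> = (\<Sum>x\<in>UNIV. \<Sum>y\<in>UNIV. W$y$x * R$x)" by (rule sum.swap)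
    also have "\<dots> = (\<Sum>x\<in>UNIV. R$x * (\<Sum>y\<in>UNIV. W$y$x))" by (simp add: sum_distrib_left mult.commute)
    also have "\<dots> = (\<Sum>x\<in>UNIV. R$x)" using A(6) by simp
    finally show ?thesis .
  qed
  have nnW: "(W *v R)$y \<ge> 0" if "\<forall>x. R$x \<ge> 0" for R y
    unfolding Wc using that A(5) by (intro sum_nonneg) auto
  have sumQ: "(\<Sum>y\<in>UNIV. Q$y) = 1" using sumW sumP by (simp add: Q_def)
  have pmfD: "\<forall>x. R$x \<ge> 0" "(\<Sum>x\<in>UNIV. R$x) = 1" if "pmf_vec R" for R
    using that by (auto simp: pmf_vec_def)
  define u where "u = (\<lambda>(R::real^'x) x. R$x / P$x - 1)"
  define v where "v = (\<lambda>(R::real^'x) y. (W *v R)$y / Q$y - 1)"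
  define w where "w = (\<lambda>y x. W$y$x * P$x / Q$y)"
  have wnn: "\<And>y x. w y x \<ge> 0" using A(5) Ppos Qpos unfolding w_def by (simp add: less_imp_le)
  have wsum: "(\<Sum>x\<in>UNIV. w y x) = 1" for y
  proof -
    have "(\<Sum>x\<in>UNIV. w y x) = (\<Sum>x\<in>UNIV. W$y$x * P$x) / Q$y" unfolding w_def by (simp add: sum_divide_distrib)
    also have "\<dots> = 1" using Qne[of y] by (simp add: Q_def Wc)
    finally show ?thesis .
  qed
  have v_eq: "v R y = (\<Sum>x\<in>UNIV. w y x * u R x)" for R y
  proof -
    have "(\<Sum>x\<in>UNIV. w y x * u R x) = (\<Sum>x\<in>UNIV. W$y$x * R$x / Q$y - W$y$x * P$x / Q$y)"
      unfolding w_def u_def using Pne Qne[of y] by (intro sum.cong) (auto simp: field_simps)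
    also have "\<dots> = (W *v R)$y / Q$y - 1"
      using wsum[of y] by (simp add: sum_subtractf sum_divide_distrib[symmetric] Wc w_def)
    finally show ?thesis by (simp add: v_def)
  qed
  have uP: "(\<Sum>x\<in>UNIV. P$x * u R x) = 0" if "pmf_vec R" for R
  proof -
    have "(\<Sum>x\<in>UNIV. P$x * u R x) = (\<Sum>x\<in>UNIV. R$x - P$x)"
      unfolding u_def using Pne by (intro sum.cong) (auto simp: field_simps)
    then show ?thesis using pmfD[OF that] sumP by (simp add: sum_subtractf)
  qed
  have vQ: "(\<Sum>y\<in>UNIV. Q$y * v R y) = 0" if "pmf_vec R" for R
  proof -
    have "(\<Sum>y\<in>UNIV. Q$y * v R y) = (\<Sum>y\<in>UNIV. (W *v R)$y - Q$y)"
      unfolding v_def using Qne by (intro sum.cong) (auto simp: field_simps)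
    then show ?thesis using pmfD[OF that] sumQ sumW[of R] by (simp add: sum_subtractf)
  qed
  define cX where "cX = (\<lambda>R. \<Sum>x\<in>UNIV. P$x * (u R x)\<^sup>2)"
  define cY where "cY = (\<lambda>R. \<Sum>y\<in>UNIV. Q$y * (v R y)\<^sup>2)"
  have cXnn: "cX R \<ge> 0" for R unfolding cX_def using Ppos by (intro sum_nonneg) (auto simp: less_imp_le)
  have cYnn: "cY R \<ge> 0" for R unfolding cY_def using Qpos by (intro sum_nonneg) (auto simp: less_imp_le)
  have cYle: "cY R \<le> cX R" for R
  proof -
    have "cY R \<le> (\<Sum>y\<in>UNIV. \<Sum>x\<in>UNIV. W$y$x * P$x * (u R x)\<^sup>2)"
      unfolding cY_def
    proof (rule sum_mono)
      fix y
      have "(v R y)\<^sup>2 \<le> (\<Sum>x\<in>UNIV. w y x * (u R x)\<^sup>2)"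
        unfolding v_eq by (rule jensen_sq) (auto simp: wnn wsum)
      then have "Q$y * (v R y)\<^sup>2 \<le> Q$y * (\<Sum>x\<in>UNIV. w y x * (u R x)\<^sup>2)"
        using Qpos[of y] by (intro mult_left_mono) auto
      also have "\<dots> = (\<Sum>x\<in>UNIV. W$y$x * P$x * (u R x)\<^sup>2)"
        unfolding sum_distrib_left w_def using Qne[of y] by (intro sum.cong) auto
      finally show "Q$y * (v R y)\<^sup>2 \<le> (\<Sum>x\<in>UNIV. W$y$x * P$x * (u R x)\<^sup>2)" .
    qed
    also have "\<dots> = (\<Sum>x\<in>UNIV. \<Sum>y\<in>UNIV. W$y$x * P$x * (u R x)\<^sup>2)" by (rule sum.swap)
    also have "\<dots> = (\<Sum>x\<in>UNIV. P$x * (u R x)\<^sup>2 * (\<Sum>y\<in>UNIV. W$y$x))"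
      by (simp add: sum_distrib_left sum_distrib_right ac_simps)
    also have "\<dots> = cX R" using A(6) by (simp add: cX_def)
    finally show ?thesis .
  qed
  have chiX: "fdiv chi2 R P = ereal (cX R)" if "pmf_vec R" for R
    unfolding cX_def u_def using pmfD[OF that] sumP by (intro fdiv_chi2) (auto simp: Ppos)
  have chiY: "fdiv chi2 (W *v R) (W *v P) = ereal (cY R)" if "pmf_vec R" for R
    unfolding cY_def v_def Q_def[symmetric] using pmfD[OF that] sumQ sumW[of R]
    by (intro fdiv_chi2) (auto simp: Qpos nnW)
  define ES where "ES = {fdiv chi2 (W *v R) (W *v P) / fdiv chi2 R P | R.
                 pmf_vec R \<and> 0 < fdiv chi2 R P \<and> fdiv chi2 R P < \<infinity>}"
  have Plt1: "P$x < 1" for x using lt1[OF A(1)] Ppos sumP by blast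
  have Qlt1: "Q$y < 1" for y using lt1[OF A(2)] Qpos sumQ by blast
  have etaeq: "eta chi2 P W = Sup ES"
    unfolding eta_def ES_def Q_def[symmetric] using Plt1 Qlt1 by (auto simp: less_le)
  have ESD: "\<exists>R. pmf_vec R \<and> cX R > 0 \<and> e = ereal (cY R / cX R)" if "e \<in> ES" for e
  proof -
    from that obtain R where R: "pmf_vec R" "0 < fdiv chi2 R P" "e = fdiv chi2 (W *v R) (W *v P) / fdiv chi2 R P"
      unfolding ES_def by blast
    have "cX R > 0" using R(2) chiX[OF R(1)] by simp
    then show ?thesis using R chiX[OF R(1)] chiY[OF R(1)] by auto
  qed
  have ESI: "ereal (cY R / cX R) \<in> ES" if "pmf_vec R" "cX R > 0" for R
    unfolding ES_def using that chiX[OF that(1)] chiY[OF that(1)] by (intro CollectI exI[of _ R]) auto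
  have ES_le1: "e \<le> 1" if ein: "e \<in> ES" for e
  proof -
    obtain R where "pmf_vec R" "cX R > 0" "e = ereal (cY R / cX R)" using ESD[OF ein] by blast
    then show ?thesis using cYle[of R] by (simp add: divide_le_eq)
  qed
  obtain x0 :: 'x where True by simp
  define R0 where "R0 = (axis x0 1 :: real^'x)"
  have R0pmf: "pmf_vec R0"
    unfolding pmf_vec_def R0_def by (auto simp: axis_def)
  have "cX R0 > 0"
  proof -
    have "u R0 x0 > 0" unfolding u_def R0_def using Plt1[of x0] Ppos[of x0] by (simp add: axis_def)
    then have "P$x0 * (u R0 x0)\<^sup>2 > 0" using Ppos[of x0] by simp
    also have "\<dots> \<le> cX R0" unfolding cX_def
      using Ppos by (intro member_le_sum) (auto simp: less_imp_le)
    finally show ?thesis .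
  qed
  then have "ereal (cY R0 / cX R0) \<in> ES" using ESI R0pmf by blast
  moreover have "ereal (cY R0 / cX R0) \<ge> 0" using cYnn \<open>cX R0 > 0\<close> by simp
  ultimately have Sup0: "Sup ES \<ge> 0" by (meson Sup_upper order_trans)
  have Sup1: "Sup ES \<le> 1" using ES_le1 by (simp add: Sup_least)
  define \<eta> where "\<eta> = real_of_ereal (Sup ES)"
  have eta_r: "Sup ES = ereal \<eta>" using Sup0 Sup1 unfolding \<eta>_def
    by (metis abs_ereal_ge0 ereal_infty_less_eq(1) ereal_real' ereal_times(1) one_ereal_def order.trans)
  have eta01: "0 \<le> \<eta>" "\<eta> \<le> 1" using Sup0 Sup1 eta_r by auto
  define D where "D = deriv (deriv f) 1"
  define a where "a = D / 2"
  have apos: "a > 0" using A(13) by (simp add: a_def D_def)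
  from lowbnd[OF A(8) A(12) A(10) A(11) A(13)] obtain \<rho>0 where \<rho>0: "\<rho>0 > 0"
      "\<forall>t>0. f t - deriv f 1 * (t-1) \<ge> 0"
      "\<forall>\<rho>. 0 < \<rho> \<and> \<rho> < \<rho>0 \<longrightarrow> (\<forall>t>0. \<bar>t-1\<bar> \<ge> \<rho> \<longrightarrow> f t - deriv f 1 * (t-1) \<ge> D/4 * \<rho>\<^sup>2)"
    unfolding D_def by blast
  define pmin where "pmin = Min (range (\<lambda>x. P$x))"
  have pmin: "pmin > 0" "\<And>x. pmin \<le> P$x"
  proof -
    have "pmin \<in> range (\<lambda>x. P$x)" unfolding pmin_def by (intro Min_in) auto
    then show "pmin > 0" using Ppos by auto
    show "\<And>x. pmin \<le> P$x" unfolding pmin_def by (intro Min_le) auto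
  qed
  have region: "\<exists>\<delta>0>0. \<forall>R. pmf_vec R \<and> fdiv f R P \<le> ereal \<delta>0 \<longrightarrow> (\<forall>x. \<bar>u R x\<bar> < \<rho>)"
    if r: "0 < \<rho>" "\<rho> < 1" for \<rho>
  proof -
    define \<rho>' where "\<rho>' = min \<rho> (\<rho>0/2)"
    have r': "0 < \<rho>'" "\<rho>' < \<rho>0" "\<rho>' \<le> \<rho>" "\<rho>' < 1" using r \<rho>0(1) by (auto simp: \<rho>'_def)
    define m where "m = D/4 * \<rho>'\<^sup>2"
    have m: "m > 0" using A(13) r' by (simp add: m_def D_def)
    have far: "\<forall>t>0. \<bar>t-1\<bar> \<ge> \<rho>' \<longrightarrow> f t - deriv f 1 * (t-1) \<ge> m"
      using \<rho>0(3) r' unfolding m_def by blast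
    have fz: "f_zero f \<ge> ereal (m - deriv f 1)"
      by (rule fzero_bound[OF A(8) A(12) \<rho>0(2) far r'(1) r'(4)])
    show ?thesis
    proof (intro exI[of _ "pmin * m / 2"] conjI allI impI)
      show "pmin * m / 2 > 0" using pmin m by simp
      fix R assume H: "pmf_vec R \<and> fdiv f R P \<le> ereal (pmin * m / 2)"
      fix x show "\<bar>u R x\<bar> < \<rho>"
      proof (rule ccontr)
        assume "\<not> \<bar>u R x\<bar> < \<rho>"
        then have ux: "\<bar>R$x/P$x - 1\<bar> \<ge> \<rho>'" using r' unfolding u_def by auto
        have low: "fdiv f R P \<ge> ereal (\<Sum>i\<in>UNIV. P$i * (if \<bar>R$i/P$i - 1\<bar> \<ge> \<rho>' then m else 0))"
          using pmfD[of R] H sumP r'(4)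
          by (intro fdiv_lower[OF _ _ _ \<rho>0(2) far fz]) (auto simp: Ppos)
        have "P$x * m \<le> (\<Sum>i\<in>UNIV. P$i * (if \<bar>R$i/P$i - 1\<bar> \<ge> \<rho>' then m else 0))"
        proof -
          have "P$x * (if \<bar>R$x/P$x - 1\<bar> \<ge> \<rho>' then m else 0) \<le> (\<Sum>i\<in>UNIV. P$i * (if \<bar>R$i/P$i - 1\<bar> \<ge> \<rho>' then m else 0))"
            using Ppos m by (intro member_le_sum) (auto simp: less_imp_le)
          then show ?thesis using ux by simp
        qed
        moreover have "pmin * m \<le> P$x * m" using pmin(2)[of x] m by (simp add: mult_right_mono)
        ultimately have "ereal (pmin * m) \<le> fdiv f R P" using low by (meson ereal_less_eq(3) order_trans)
        then have "pmin * m \<le> pmin * m / 2" using H by (metis ereal_less_eq(3) order_trans)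
        then show False using pmin m by simp
      qed
    qed
  qed
  have approx: "\<exists>\<rho>>0. \<rho> < 1 \<and> (\<forall>R. pmf_vec R \<and> (\<forall>x. \<bar>u R x\<bar> < \<rho>) \<longrightarrow>
      (\<exists>DX DY. fdiv f R P = ereal DX \<and> fdiv f (W *v R) (W *v P) = ereal DY \<and>
        \<bar>DX - a * cX R\<bar> \<le> e * (a * cX R) \<and> \<bar>DY - a * cY R\<bar> \<le> e * (a * cY R)))" if e: "e > 0" for e
  proof -
    have "e * a > 0" using e apos by simp
    from taylor1[OF A(10) A(11) this] obtain \<rho>T where \<rho>T: "\<rho>T > 0"
      "\<forall>u. \<bar>u\<bar> < \<rho>T \<longrightarrow> \<bar>f (1+u) - f 1 - deriv f 1 * u - a * u\<^sup>2\<bar> \<le> e * a * u\<^sup>2"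
      unfolding a_def D_def by auto
    define \<rho> where "\<rho> = min \<rho>T (1/2)"
    show ?thesis
    proof (rule exI[of _ \<rho>], intro conjI allI impI)
      show "\<rho> > 0" "\<rho> < 1" using \<rho>T by (auto simp: \<rho>_def)
      fix R assume H: "pmf_vec R \<and> (\<forall>x. \<bar>u R x\<bar> < \<rho>)"
      define B where "B = Max (range (\<lambda>x. \<bar>u R x\<bar>))"
      have "B \<in> range (\<lambda>x. \<bar>u R x\<bar>)" unfolding B_def by (intro Min_in Max_in) auto
      then have B: "B < \<rho>" using H by auto
      have uB: "\<bar>u R x\<bar> \<le> B" for x unfolding B_def by (intro Max_ge) auto
      have vB: "\<bar>v R y\<bar> \<le> B" for y
        unfolding v_eq by (rule avg_bound) (auto simp: wnn wsum uB)
      have ur: "\<bar>u R x\<bar> < \<rho>T" "\<bar>u R x\<bar> < 1/2" for x using uB[of x] B by (auto simp: \<rho>_def)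
      have vr: "\<bar>v R y\<bar> < \<rho>T" "\<bar>v R y\<bar> < 1/2" for y using vB[of y] B by (auto simp: \<rho>_def)
      have Rx: "R$x = P$x * (1 + u R x)" for x unfolding u_def using Pne[of x] by (simp add: field_simps)
      have WRy: "(W *v R)$y = Q$y * (1 + v R y)" for y unfolding v_def using Qne[of y] by (simp add: field_simps)
      have Rpos: "\<forall>x. R$x > 0"
      proof
        fix x have "1 + u R x > 0" using ur(2)[of x] by (simp add: abs_less_iff)
        then show "R$x > 0" using Rx[of x] Ppos[of x] by simp
      qed
      have WRpos: "\<forall>y. (W *v R)$y > 0"
      proof
        fix y have "1 + v R y > 0" using vr(2)[of y] by (simp add: abs_less_iff)
        then show "(W *v R)$y > 0" using WRy[of y] Qpos[of y] by simp
      qed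
      have fX: "fdiv f R P = ereal (\<Sum>x\<in>UNIV. P$x * f (1 + u R x))"
        using fdiv_pos[of P R f] Ppos Rpos by (simp add: u_def)
      have fY: "fdiv f (W *v R) (W *v P) = ereal (\<Sum>y\<in>UNIV. Q$y * f (1 + v R y))"
        using fdiv_pos[of Q "W *v R" f] Qpos WRpos by (simp add: v_def Q_def)
      have tX: "\<bar>(\<Sum>x\<in>UNIV. P$x * f (1 + u R x)) - a * cX R\<bar> \<le> (e * a) * cX R"
        unfolding cX_def
        by (rule taylor_sum[where A=UNIV and Q="\<lambda>x. P$x" and u="u R" and f=f and a=a and e="e*a"])
           (use H Ppos ur \<rho>T uP[of R] A(12) in \<open>auto simp: less_imp_le\<close>)
      have tY: "\<bar>(\<Sum>y\<in>UNIV. Q$y * f (1 + v R y)) - a * cY R\<bar> \<le> (e * a) * cY R"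
        unfolding cY_def
        by (rule taylor_sum[where A=UNIV and Q="\<lambda>y. Q$y" and u="v R" and f=f and a=a and e="e*a"])
           (use H Qpos vr \<rho>T vQ[of R] A(12) in \<open>auto simp: less_imp_le\<close>)
      show "\<exists>DX DY. fdiv f R P = ereal DX \<and> fdiv f (W *v R) (W *v P) = ereal DY \<and>
        \<bar>DX - a * cX R\<bar> \<le> e * (a * cX R) \<and> \<bar>DY - a * cY R\<bar> \<le> e * (a * cY R)"
        using fX fY tX tY by (simp add: mult.assoc)
    qed
  qed
  define S where "S = (\<lambda>\<delta>. {fdiv f (W *v R) (W *v P) / fdiv f R P | R.
                    pmf_vec R \<and> 0 < fdiv f R P \<and> fdiv f R P \<le> ereal \<delta>})"
  have "((\<lambda>\<delta>. Sup (S \<delta>)) \<longlongrightarrow> ereal \<eta>) (at_right 0)"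
  proof (rule order_tendstoI)
    fix b' assume "b' < ereal \<eta>"
    then obtain z where z: "b' < ereal z" "ereal z < ereal \<eta>" using ereal_dense2 by blast
    have "ereal z < Sup ES" using z eta_r by simp
    then obtain e0 where "e0 \<in> ES" "ereal z < e0" using less_Sup_iff by blast
    then obtain R0 where R0: "pmf_vec R0" "cX R0 > 0" "ereal z < ereal (cY R0 / cX R0)" using ESD by blast
    define r0 where "r0 = cY R0 / cX R0"
    have r0: "z < r0" "r0 \<le> 1" "0 \<le> r0" using R0 cYle[of R0] cYnn[of R0]
      by (auto simp: r0_def divide_le_eq)
    define \<gamma> where "\<gamma> = r0 - z"
    have \<gamma>: "\<gamma> > 0" using r0 by (simp add: \<gamma>_def)
    define \<epsilon> where "\<epsilon> = min (1/2) (\<gamma>/8)"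
    have e1: "\<epsilon> > 0" using \<gamma> unfolding \<epsilon>_def by simp
    have e2: "\<epsilon> \<le> 1/2" unfolding \<epsilon>_def by (rule min.cobounded1)
    have e3: "\<epsilon> \<le> \<gamma>/8" unfolding \<epsilon>_def by (rule min.cobounded2)
    note \<epsilon> = e1 e2 e3
    from approx[OF \<epsilon>(1)] obtain \<rho> where \<rho>: "\<rho> > 0" "\<rho> < 1"
      "\<And>R. pmf_vec R \<and> (\<forall>x. \<bar>u R x\<bar> < \<rho>) \<Longrightarrow>
      (\<exists>DX DY. fdiv f R P = ereal DX \<and> fdiv f (W *v R) (W *v P) = ereal DY \<and>
        \<bar>DX - a * cX R\<bar> \<le> \<epsilon> * (a * cX R) \<and> \<bar>DY - a * cY R\<bar> \<le> \<epsilon> * (a * cY R))" by blast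
    define B where "B = (\<Sum>x\<in>UNIV. \<bar>u R0 x\<bar>) + 1"
    have uB: "\<bar>u R0 x\<bar> \<le> B" for x
    proof -
      have "\<bar>u R0 x\<bar> \<le> (\<Sum>x\<in>UNIV. \<bar>u R0 x\<bar>)" by (intro member_le_sum) auto
      then show ?thesis by (simp add: B_def)
    qed
    have Bpos: "B > 0" unfolding B_def by (simp add: add_nonneg_pos sum_nonneg)
    have cX0: "cX R0 > 0" using R0 by simp
    show "\<forall>\<^sub>F \<delta> in at_right 0. b' < Sup (S \<delta>)"
      unfolding eventually_at_right_field
    proof (rule exI[of _ 1], intro conjI allI impI)
      show "(0::real) < 1" by simp
      fix \<delta> :: real assume \<delta>: "0 < \<delta>" "\<delta> < 1"
      define K where "K = (1 + \<epsilon>) * a * cX R0"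
      have K: "K > 0" using \<epsilon> apos cX0 by (simp add: K_def)
      define t where "t = min 1 (min (\<rho> / (2 * B)) (\<delta> / K))"
      have t: "0 < t" "t \<le> 1" "t \<le> \<rho> / (2 * B)" "t \<le> \<delta> / K"
        using \<rho> Bpos K \<delta> by (auto simp: t_def)
      have tB: "t * B \<le> \<rho> / 2" using t(3) Bpos by (simp add: le_divide_eq ac_simps)
      have tK: "K * t \<le> \<delta>" using t(4) K by (simp add: le_divide_eq mult.commute)
      define Rt where "Rt = (\<chi> x. P$x + t * (R0$x - P$x))"
      have Rtc: "Rt$x = P$x + t * (R0$x - P$x)" for x by (simp add: Rt_def)
      have Rtpmf: "pmf_vec Rt"
        unfolding pmf_vec_def
      proof
        show "\<forall>x. 0 \<le> Rt$x"
        proof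
          fix x
          have "Rt$x = (1 - t) * P$x + t * R0$x" by (simp add: Rtc algebra_simps)
          moreover have "0 \<le> (1 - t) * P$x" using t Ppos[of x] by simp
          moreover have "0 \<le> t * R0$x" using t pmfD(1)[OF R0(1)] by simp
          ultimately show "0 \<le> Rt$x" by simp
        qed
        show "(\<Sum>x\<in>UNIV. Rt$x) = 1"
          using sumP pmfD(2)[OF R0(1)]
          by (simp add: Rtc sum.distrib sum_distrib_left[symmetric] sum_subtractf)
      qed
      have uRt: "u Rt x = t * u R0 x" for x
        unfolding u_def Rtc using Pne[of x] by (simp add: field_simps)
      have vRt: "v Rt y = t * v R0 y" for y
        unfolding v_eq uRt by (simp add: sum_distrib_left ac_simps)
      have cXt: "cX Rt = t\<^sup>2 * cX R0"
        unfolding cX_def uRt by (simp add: sum_distrib_left power_mult_distrib ac_simps)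
      have cYt: "cY Rt = t\<^sup>2 * cY R0"
        unfolding cY_def vRt by (simp add: sum_distrib_left power_mult_distrib ac_simps)
      have usmall: "\<forall>x. \<bar>u Rt x\<bar> < \<rho>"
      proof
        fix x
        have "\<bar>u Rt x\<bar> = t * \<bar>u R0 x\<bar>" using t by (simp add: uRt abs_mult)
        also have "\<dots> \<le> t * B" using uB[of x] t by (simp add: mult_left_mono)
        also have "\<dots> < \<rho>" using tB \<rho> by simp
        finally show "\<bar>u Rt x\<bar> < \<rho>" .
      qed
      from \<rho>(3)[of Rt] Rtpmf usmall obtain DX DY where DD:
        "fdiv f Rt P = ereal DX" "fdiv f (W *v Rt) (W *v P) = ereal DY"
        "\<bar>DX - a * cX Rt\<bar> \<le> \<epsilon> * (a * cX Rt)" "\<bar>DY - a * cY Rt\<bar> \<le> \<epsilon> * (a * cY Rt)" by blast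
      have t2: "t\<^sup>2 > 0" using t by simp
      have cXtp: "cX Rt > 0" using cXt t2 cX0 by simp
      note rb = ratio_bounds[OF \<epsilon>(1) \<epsilon>(2) apos cXtp cYnn DD(3) DD(4)]
      have rr: "cY Rt / cX Rt = r0" using t2 by (simp add: cXt cYt r0_def)
      have "DX \<le> (1 + \<epsilon>) * (a * cX Rt)" using DD(3) by (simp add: abs_le_iff algebra_simps)
      also have "\<dots> = K * t\<^sup>2" by (simp add: K_def cXt ac_simps)
      also have "\<dots> \<le> K * t" using K t by (simp add: power2_eq_square mult_left_le_one_le)
      also have "\<dots> \<le> \<delta>" by (rule tK)
      finally have DXd: "DX \<le> \<delta>" .
      have mem: "ereal (DY / DX) \<in> S \<delta>"
        unfolding S_def using Rtpmf DD(1,2) rb(3) DXd by (intro CollectI exI[of _ Rt]) auto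
      have "z < (1 - 2 * \<epsilon>) * r0"
      proof -
        have "(1 - 2 * \<epsilon>) * r0 = r0 - 2 * \<epsilon> * r0" by (simp add: algebra_simps)
        moreover have "2 * \<epsilon> * r0 \<le> 2 * \<epsilon>" using r0 \<epsilon> by (simp add: mult_left_le_one_le)
        moreover have "2 * \<epsilon> < r0 - z"
        proof -
          have "8 * \<epsilon> \<le> r0 - z" using \<epsilon>(3) unfolding \<gamma>_def by (simp add: le_divide_eq)
          then show ?thesis using \<epsilon>(1) by linarith
        qed
        ultimately show ?thesis by linarith
      qed
      also have "\<dots> \<le> DY / DX" using rb(2) rr by simp
      finally have "ereal z < ereal (DY / DX)" by simp
      also have "\<dots> \<le> Sup (S \<delta>)" using mem by (rule Sup_upper)
      finally show "b' < Sup (S \<delta>)" using z(1) by simp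
    qed
  next
    fix b' assume "ereal \<eta> < b'"
    then obtain z where z: "ereal \<eta> < ereal z" "ereal z < b'" using ereal_dense2 by blast
    define \<epsilon> where "\<epsilon> = min (1/2) ((z - \<eta>)/8)"
    have e1: "\<epsilon> > 0" using z unfolding \<epsilon>_def by simp
    have e2: "\<epsilon> \<le> 1/2" unfolding \<epsilon>_def by (rule min.cobounded1)
    have e3: "\<epsilon> \<le> (z - \<eta>)/8" unfolding \<epsilon>_def by (rule min.cobounded2)
    note \<epsilon> = e1 e2 e3
    from approx[OF \<epsilon>(1)] obtain \<rho> where \<rho>: "\<rho> > 0" "\<rho> < 1"
      "\<And>R. pmf_vec R \<and> (\<forall>x. \<bar>u R x\<bar> < \<rho>) \<Longrightarrow>
      (\<exists>DX DY. fdiv f R P = ereal DX \<and> fdiv f (W *v R) (W *v P) = ereal DY \<and>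
        \<bar>DX - a * cX R\<bar> \<le> \<epsilon> * (a * cX R) \<and> \<bar>DY - a * cY R\<bar> \<le> \<epsilon> * (a * cY R))" by blast
    from region[OF \<rho>(1,2)] obtain \<delta>0 where \<delta>0: "\<delta>0 > 0"
      "\<And>R. pmf_vec R \<and> fdiv f R P \<le> ereal \<delta>0 \<Longrightarrow> (\<forall>x. \<bar>u R x\<bar> < \<rho>)" by blast
    show "\<forall>\<^sub>F \<delta> in at_right 0. Sup (S \<delta>) < b'"
      unfolding eventually_at_right_field
    proof (rule exI[of _ \<delta>0], intro conjI allI impI)
      show "0 < \<delta>0" by (rule \<delta>0(1))
      fix \<delta> :: real assume \<delta>: "0 < \<delta>" "\<delta> < \<delta>0"
      have "Sup (S \<delta>) \<le> ereal (\<eta> + 4 * \<epsilon>)"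
      proof (rule Sup_least)
        fix e assume "e \<in> S \<delta>"
        then obtain R where R: "e = fdiv f (W *v R) (W *v P) / fdiv f R P" "pmf_vec R"
          "0 < fdiv f R P" "fdiv f R P \<le> ereal \<delta>" unfolding S_def by blast
        have "fdiv f R P \<le> ereal \<delta>0" using R(4) \<delta> by (meson ereal_less_eq(3) less_imp_le order_trans)
        then have "\<forall>x. \<bar>u R x\<bar> < \<rho>" using \<delta>0(2) R(2) by blast
        then obtain DX DY where DD:
          "fdiv f R P = ereal DX" "fdiv f (W *v R) (W *v P) = ereal DY"
          "\<bar>DX - a * cX R\<bar> \<le> \<epsilon> * (a * cX R)" "\<bar>DY - a * cY R\<bar> \<le> \<epsilon> * (a * cY R)"
          using \<rho>(3) R(2) by blast
        have DXp: "DX > 0" using R(3) DD(1) by simp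
        have cXp: "cX R > 0"
        proof (rule ccontr)
          assume "\<not> cX R > 0"
          then have "cX R = 0" using cXnn[of R] by simp
          then show False using DD(3) DXp by simp
        qed
        note rb = ratio_bounds[OF \<epsilon>(1) \<epsilon>(2) apos cXp cYnn DD(3) DD(4)]
        have "ereal (cY R / cX R) \<le> Sup ES" using ESI[OF R(2) cXp] by (rule Sup_upper)
        then have rle: "cY R / cX R \<le> \<eta>" using eta_r by simp
        have r01: "cY R / cX R \<le> 1" "0 \<le> cY R / cX R" using cYle[of R] cYnn[of R] cXp
          by (auto simp: divide_le_eq)
        have "DY / DX \<le> (1 + 4 * \<epsilon>) * (cY R / cX R)" by (rule rb(1))
        also have "\<dots> = cY R / cX R + 4 * \<epsilon> * (cY R / cX R)" by (simp add: algebra_simps)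
        also have "\<dots> \<le> \<eta> + 4 * \<epsilon>"
        proof -
          have "4 * \<epsilon> * (cY R / cX R) \<le> 4 * \<epsilon>"
            using r01 \<epsilon> by (intro mult_right_le_one_le) auto
          then show ?thesis using rle by linarith
        qed
        finally show "e \<le> ereal (\<eta> + 4 * \<epsilon>)" using R(1) DD(1,2) DXp by simp
      qed
      also have "ereal (\<eta> + 4 * \<epsilon>) < ereal z" using \<epsilon>(3) z(1) by simp
      also have "\<dots> < b'" by (rule z(2))
      finally show "Sup (S \<delta>) < b'" .
    qed
  qed
  then show ?thesis unfolding etaeq eta_r S_def .
qed


end
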